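(* Let $S$ be a finite semigroup whose minimal ideal $J$ consists of right zeroes and such that $S$ acts faithfully on the right of $J$. Then $\llbracket S\rrbracket^{\mathsf{bar}}=\llbracket S\rrbracket$.
   Context: A pseudovariety is a class of finite semigroups closed under finite direct products, subsemigroups and homomorphic images; $\llbracket\mathscr{K}\rrbracket$ is the pseudovariety generated by $\mathscr{K}$. An element $z$ is a right zero if $sz=z$ for all $s$. For a semigroup $S$, $S^\bullet=S$ if $S$ is a monoid and $S^\bullet=S^I$ (external identity adjoined) otherwise; $S^{\mathsf{bar}}$ is the semigroup of transformations of $S^\bullet$ (acting on the right) consisting of right multiplications by elements of $S$ together with all constant maps on $S^\bullet$. For a pseudovariety $\mathbf{V}$, $\mathbf{V}^{\mathsf{bar}}=\llbracket T^{\mathsf{bar}}\mid T\in\mathbf{V}\rrbracket$. *)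

theory Defs
  imports Main
begin

type_synonym 'a sgr = "'a set \<times> ('a \<Rightarrow> 'a \<Rightarrow> 'a)"

definition is_sg :: "'a sgr \<Rightarrow> bool" where
  "is_sg S \<longleftrightarrow> fst S \<noteq> {} \<and>
     (\<forall>x\<in>fst S. \<forall>y\<in>fst S. snd S x y \<in> fst S) \<and>
     (\<forall>x\<in>fst S. \<forall>y\<in>fst S. \<forall>z\<in>fst S. snd S (snd S x y) z = snd S x (snd S y z))"

definition fin_sg :: "'a sgr \<Rightarrow> bool" where
  "fin_sg S \<longleftrightarrow> is_sg S \<and> finite (fst S)"

definition sg_hom :: "('a \<Rightarrow> 'b) \<Rightarrow> 'a sgr \<Rightarrow> 'b sgr \<Rightarrow> bool" where
  "sg_hom f S T \<longleftrightarrow> (\<forall>x\<in>fst S. f x \<in> fst T) \<and>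
     (\<forall>x\<in>fst S. \<forall>y\<in>fst S. f (snd S x y) = snd T (f x) (f y))"

definition divides :: "'b sgr \<Rightarrow> 'c sgr \<Rightarrow> bool" where
  "divides U V \<longleftrightarrow> (\<exists>W f. W \<subseteq> fst V \<and> is_sg (W, snd V) \<and>
       sg_hom f (W, snd V) U \<and> f ` W = fst U)"

text \<open>Direct product of a finite list of semigroups (empty list: trivial semigroup).\<close>
definition prod_sg :: "'c sgr list \<Rightarrow> (nat \<Rightarrow> 'c) sgr" where
  "prod_sg Ss = ({f. (\<forall>i<length Ss. f i \<in> fst (Ss ! i)) \<and> (\<forall>i\<ge>length Ss. f i = undefined)},
     (\<lambda>f g i. if i < length Ss then snd (Ss ! i) (f i) (g i) else undefined))"

text \<open>Membership of U in the pseudovariety generated by the class K.\<close>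
definition in_pv :: "'c sgr set \<Rightarrow> 'b sgr \<Rightarrow> bool" where
  "in_pv K U \<longleftrightarrow> fin_sg U \<and> (\<exists>Ss. set Ss \<subseteq> K \<and> divides U (prod_sg Ss))"

definition is_ideal :: "'a sgr \<Rightarrow> 'a set \<Rightarrow> bool" where
  "is_ideal S I \<longleftrightarrow> I \<noteq> {} \<and> I \<subseteq> fst S \<and>
     (\<forall>s\<in>fst S. \<forall>x\<in>I. snd S s x \<in> I \<and> snd S x s \<in> I)"

definition minimal_ideal :: "'a sgr \<Rightarrow> 'a set \<Rightarrow> bool" where
  "minimal_ideal S J \<longleftrightarrow> is_ideal S J \<and> (\<forall>I. is_ideal S I \<longrightarrow> J \<subseteq> I)"

definition right_zero :: "'a sgr \<Rightarrow> 'a \<Rightarrow> bool" where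
  "right_zero S z \<longleftrightarrow> z \<in> fst S \<and> (\<forall>s\<in>fst S. snd S s z = z)"

definition faithful_right :: "'a sgr \<Rightarrow> 'a set \<Rightarrow> bool" where
  "faithful_right S J \<longleftrightarrow> (\<forall>s\<in>fst S. \<forall>t\<in>fst S. (\<forall>j\<in>J. snd S j s = snd S j t) \<longrightarrow> s = t)"

definition is_monoid :: "'a sgr \<Rightarrow> bool" where
  "is_monoid S \<longleftrightarrow> (\<exists>e\<in>fst S. \<forall>x\<in>fst S. snd S e x = x \<and> snd S x e = x)"

text \<open>Carrier of S^bullet: S itself if S is a monoid, else S with a new identity None.\<close>
definition dot_carrier :: "'a sgr \<Rightarrow> 'a option set" where
  "dot_carrier S = (if is_monoid S then Some ` fst S else insert None (Some ` fst S))"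

definition rmul :: "'a sgr \<Rightarrow> 'a \<Rightarrow> 'a option \<Rightarrow> 'a option" where
  "rmul S s = (\<lambda>x. if x \<in> dot_carrier S then
       (case x of None \<Rightarrow> Some s | Some y \<Rightarrow> Some (snd S y s)) else None)"

definition cmap :: "'a sgr \<Rightarrow> 'a option \<Rightarrow> 'a option \<Rightarrow> 'a option" where
  "cmap S c = (\<lambda>x. if x \<in> dot_carrier S then c else None)"

text \<open>S^bar: transformations of S^bullet acting on the right (so f\<cdot>g = g \<circ> f).\<close>
definition bar :: "'a sgr \<Rightarrow> ('a option \<Rightarrow> 'a option) sgr" where
  "bar S = (rmul S ` fst S \<union> cmap S ` dot_carrier S,
     (\<lambda>f g x. if x \<in> dot_carrier S then g (f x) else None))"

end

theory Submission
  imports Defs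
begin


lemma factor:
  assumes B: "is_sg B" and Cne: "C \<noteq> {}" and Ccl: "\<forall>x\<in>C. \<forall>y\<in>C. op x y \<in> C"
    and ha: "sg_hom \<alpha> (C, op) B" and hb: "sg_hom \<beta> (C, op) A" and onto: "\<beta> ` C = fst A"
    and ker: "\<forall>x\<in>C. \<forall>y\<in>C. \<alpha> x = \<alpha> y \<longrightarrow> \<beta> x = \<beta> y"
  shows "divides A B"
proof -
  define W where "W = \<alpha> ` C"
  define f where "f = (\<lambda>b. \<beta> (SOME x. x \<in> C \<and> \<alpha> x = b))"
  have fa: "f (\<alpha> x) = \<beta> x" if "x \<in> C" for x
  proof -
    have "\<exists>z. z \<in> C \<and> \<alpha> z = \<alpha> x" using that by blast
    hence "(SOME z. z \<in> C \<and> \<alpha> z = \<alpha> x) \<in> C \<and> \<alpha> (SOME z. z \<in> C \<and> \<alpha> z = \<alpha> x) = \<alpha> x"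
      by (rule someI_ex)
    thus ?thesis using ker that unfolding f_def by metis
  qed
  have hom: "\<alpha> (op a b) = snd B (\<alpha> a) (\<alpha> b)" if "a \<in> C" "b \<in> C" for a b
    using ha that unfolding sg_hom_def by auto
  have homb: "\<beta> (op a b) = snd A (\<beta> a) (\<beta> b)" if "a \<in> C" "b \<in> C" for a b
    using hb that unfolding sg_hom_def by auto
  have W1: "W \<subseteq> fst B" using ha unfolding W_def sg_hom_def by auto
  have W2: "is_sg (W, snd B)"
    unfolding is_sg_def fst_conv snd_conv
  proof (intro conjI)
    show "W \<noteq> {}" using Cne W_def by auto
    show "\<forall>x\<in>W. \<forall>y\<in>W. snd B x y \<in> W"
      unfolding W_def using hom Ccl by (auto simp flip: hom)
    show "\<forall>x\<in>W. \<forall>y\<in>W. \<forall>z\<in>W. snd B (snd B x y) z = snd B x (snd B y z)"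
      using W1 B unfolding is_sg_def by blast
  qed
  have H: "sg_hom f (W, snd B) A"
    unfolding sg_hom_def fst_conv snd_conv
  proof (intro conjI ballI)
    fix x assume "x \<in> W"
    then obtain a where "a \<in> C" "x = \<alpha> a" unfolding W_def by auto
    thus "f x \<in> fst A" using fa onto by auto
  next
    fix x y assume "x \<in> W" "y \<in> W"
    then obtain a b where ab: "a \<in> C" "x = \<alpha> a" "b \<in> C" "y = \<alpha> b" unfolding W_def by auto
    have "f (snd B x y) = f (\<alpha> (op a b))" using ab hom by simp
    also have "\<dots> = \<beta> (op a b)" using fa Ccl ab by simp
    also have "\<dots> = snd A (f x) (f y)" using homb ab fa by simp
    finally show "f (snd B x y) = snd A (f x) (f y)" .
  qed
  have "f ` W = fst A" using onto fa unfolding W_def by (auto simp: image_image)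
  thus ?thesis unfolding divides_def using W1 W2 H by blast
qed

lemma divides_trans:
  assumes AB: "divides A B" and BC: "divides B C" and C: "is_sg C"
  shows "divides A C"
proof -
  obtain W1 f1 where 1: "W1 \<subseteq> fst B" "is_sg (W1, snd B)" "sg_hom f1 (W1, snd B) A" "f1 ` W1 = fst A"
    using AB unfolding divides_def by blast
  obtain W2 f2 where 2: "W2 \<subseteq> fst C" "is_sg (W2, snd C)" "sg_hom f2 (W2, snd C) B" "f2 ` W2 = fst B"
    using BC unfolding divides_def by blast
  define D where "D = {x \<in> W2. f2 x \<in> W1}"
  have h2: "f2 (snd C x y) = snd B (f2 x) (f2 y)" if "x \<in> W2" "y \<in> W2" for x y
    using 2 that unfolding sg_hom_def by auto
  have h1: "f1 (snd B x y) = snd A (f1 x) (f1 y)" if "x \<in> W1" "y \<in> W1" for x y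
    using 1 that unfolding sg_hom_def by auto
  have cl2: "snd C x y \<in> W2" if "x \<in> W2" "y \<in> W2" for x y
    using 2(2) that unfolding is_sg_def by auto
  have cl1: "snd B x y \<in> W1" if "x \<in> W1" "y \<in> W1" for x y
    using 1(2) that unfolding is_sg_def by auto
  have "fst B \<noteq> {}" using 1 unfolding is_sg_def by auto
  have "W1 \<noteq> {}" using 1 unfolding is_sg_def by auto
  then obtain w where "w \<in> W1" by auto
  then obtain v where "v \<in> W2" "f2 v = w" using 1 2 by (metis imageE subsetD)
  hence Dne: "D \<noteq> {}" using \<open>w \<in> W1\<close> D_def by auto
  show ?thesis
  proof (rule factor[where \<alpha> = id and C = D and op = "snd C" and \<beta> = "f1 \<circ> f2"])
    show "is_sg C" by fact
    show "D \<noteq> {}" by fact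
    show "\<forall>x\<in>D. \<forall>y\<in>D. snd C x y \<in> D" unfolding D_def using cl1 cl2 h2 by auto
    show "sg_hom id (D, snd C) C" unfolding sg_hom_def D_def using 2(1) by auto
    show "sg_hom (f1 \<circ> f2) (D, snd C) A" unfolding sg_hom_def D_def
      using 1(3) h1 h2 unfolding sg_hom_def by auto
    show "(f1 \<circ> f2) ` D = fst A"
    proof
      show "(f1 \<circ> f2) ` D \<subseteq> fst A" using 1 unfolding D_def by auto
      show "fst A \<subseteq> (f1 \<circ> f2) ` D"
      proof
        fix a assume "a \<in> fst A"
        then obtain b where "b \<in> W1" "f1 b = a" by (metis 1(4) imageE)
        then obtain c where "c \<in> W2" "f2 c = b" using 1 2 by (metis imageE subsetD)
        thus "a \<in> (f1 \<circ> f2) ` D" using \<open>b \<in> W1\<close> \<open>f1 b = a\<close> D_def by auto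
      qed
    qed
    show "\<forall>x\<in>D. \<forall>y\<in>D. id x = id y \<longrightarrow> (f1 \<circ> f2) x = (f1 \<circ> f2) y" by auto
  qed
qed

lemma prod_carrier: "fst (prod_sg Ss) = {f. (\<forall>i<length Ss. f i \<in> fst (Ss ! i)) \<and> (\<forall>i\<ge>length Ss. f i = undefined)}"
  by (simp add: prod_sg_def)

lemma prod_op: "snd (prod_sg Ss) = (\<lambda>f g i. if i < length Ss then snd (Ss ! i) (f i) (g i) else undefined)"
  by (simp add: prod_sg_def)

lemma is_sg_prod:
  assumes "\<forall>i<length Ss. is_sg (Ss ! i)"
  shows "is_sg (prod_sg Ss)"
  unfolding is_sg_def
proof (intro conjI)
  define F where "F = (\<lambda>i. if i < length Ss then SOME x. x \<in> fst (Ss ! i) else undefined)"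
  have "\<forall>i<length Ss. F i \<in> fst (Ss ! i)"
  proof (intro allI impI)
    fix i assume "i < length Ss"
    hence "fst (Ss ! i) \<noteq> {}" using assms unfolding is_sg_def by auto
    thus "F i \<in> fst (Ss ! i)" using \<open>i < length Ss\<close> unfolding F_def by (simp add: some_in_eq)
  qed
  hence "F \<in> fst (prod_sg Ss)" unfolding prod_carrier F_def by auto
  thus "fst (prod_sg Ss) \<noteq> {}" by auto
  show "\<forall>x\<in>fst (prod_sg Ss). \<forall>y\<in>fst (prod_sg Ss). snd (prod_sg Ss) x y \<in> fst (prod_sg Ss)"
    using assms unfolding prod_carrier prod_op is_sg_def by auto
  show "\<forall>x\<in>fst (prod_sg Ss). \<forall>y\<in>fst (prod_sg Ss). \<forall>z\<in>fst (prod_sg Ss).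
      snd (prod_sg Ss) (snd (prod_sg Ss) x y) z = snd (prod_sg Ss) x (snd (prod_sg Ss) y z)"
    using assms unfolding prod_carrier prod_op is_sg_def by (auto intro!: ext)
qed



lemma prod_divides:
  assumes len: "length As = length Bs" and dv: "\<forall>i<length As. divides (As!i) (Bs!i)"
    and sg: "\<forall>i<length Bs. is_sg (Bs!i)"
  shows "divides (prod_sg As) (prod_sg Bs)"
proof -
  define k where "k = length Bs"
  have "\<forall>i. \<exists>p. i < k \<longrightarrow> (fst p \<subseteq> fst (Bs!i) \<and> is_sg (fst p, snd (Bs!i)) \<and>
        sg_hom (snd p) (fst p, snd (Bs!i)) (As!i) \<and> snd p ` fst p = fst (As!i))"
    using dv len unfolding divides_def k_def by fastforce
  then obtain p where p: "\<And>i. i < k \<Longrightarrow> fst (p i) \<subseteq> fst (Bs!i) \<and> is_sg (fst (p i), snd (Bs!i)) \<and>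
        sg_hom (snd (p i)) (fst (p i), snd (Bs!i)) (As!i) \<and> snd (p i) ` fst (p i) = fst (As!i)"
    by metis
  define WW where "WW i = fst (p i)" for i
  define ff where "ff i = snd (p i)" for i
  have W1: "WW i \<subseteq> fst (Bs!i)" and W2: "is_sg (WW i, snd (Bs!i))"
    and W3: "sg_hom (ff i) (WW i, snd (Bs!i)) (As!i)" and W4: "ff i ` WW i = fst (As!i)"
    if "i < k" for i using p[OF that] unfolding WW_def ff_def by auto
  have Wne: "WW i \<noteq> {}" if "i < k" for i using W2[OF that] unfolding is_sg_def by auto
  have Wcl: "snd (Bs!i) x y \<in> WW i" if "i < k" "x \<in> WW i" "y \<in> WW i" for i x y
    using W2[OF that(1)] that unfolding is_sg_def by auto
  have fin: "ff i x \<in> fst (As!i)" if "i < k" "x \<in> WW i" for i x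
    using W3[OF that(1)] that unfolding sg_hom_def by auto
  have fhom: "ff i (snd (Bs!i) x y) = snd (As!i) (ff i x) (ff i y)" if "i < k" "x \<in> WW i" "y \<in> WW i" for i x y
    using W3[OF that(1)] that unfolding sg_hom_def by auto
  define C where "C = {F \<in> fst (prod_sg Bs). \<forall>i<k. F i \<in> WW i}"
  define \<beta> where "\<beta> F = (\<lambda>i. if i < k then ff i (F i) else undefined)" for F
  show ?thesis
  proof (rule factor[where \<alpha> = id and C = C and op = "snd (prod_sg Bs)" and \<beta> = \<beta>])
    show "is_sg (prod_sg Bs)" using sg by (rule is_sg_prod)
    define F where "F = (\<lambda>i. if i < k then SOME w. w \<in> WW i else undefined)"
    have "F \<in> C" unfolding C_def prod_carrier F_def using W1 Wne k_def
      by (auto simp: some_in_eq intro: subsetD[OF W1])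
    thus "C \<noteq> {}" by auto
    show "\<forall>x\<in>C. \<forall>y\<in>C. snd (prod_sg Bs) x y \<in> C"
      unfolding C_def prod_op prod_carrier k_def using Wcl W1 k_def by (auto intro: subsetD[OF W1] Wcl)
    show "sg_hom id (C, snd (prod_sg Bs)) (prod_sg Bs)" unfolding sg_hom_def C_def by auto
    show "sg_hom \<beta> (C, snd (prod_sg Bs)) (prod_sg As)"
      unfolding sg_hom_def C_def prod_op prod_carrier \<beta>_def using len k_def fin fhom
      by (auto intro!: ext)
    show "\<beta> ` C = fst (prod_sg As)"
    proof
      show "\<beta> ` C \<subseteq> fst (prod_sg As)" unfolding C_def \<beta>_def prod_carrier using len k_def fin by auto
      show "fst (prod_sg As) \<subseteq> \<beta> ` C"
      proof
        fix G assume G: "G \<in> fst (prod_sg As)"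
        define F where "F = (\<lambda>i. if i < k then SOME w. w \<in> WW i \<and> ff i w = G i else undefined)"
        have Fi: "F i \<in> WW i \<and> ff i (F i) = G i" if "i < k" for i
        proof -
          have "G i \<in> ff i ` WW i" using G W4[OF that] that len k_def unfolding prod_carrier by auto
          hence "\<exists>w. w \<in> WW i \<and> ff i w = G i" by auto
          hence "(SOME w. w \<in> WW i \<and> ff i w = G i) \<in> WW i \<and> ff i (SOME w. w \<in> WW i \<and> ff i w = G i) = G i"
            by (rule someI_ex)
          thus ?thesis using that unfolding F_def by simp
        qed
        have "F \<in> C" unfolding C_def prod_carrier using Fi W1 k_def by (auto simp: F_def)
        moreover have "\<beta> F = G" unfolding \<beta>_def using Fi G len k_def unfolding prod_carrier
          by (auto intro!: ext simp: F_def)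
        ultimately show "G \<in> \<beta> ` C" by (metis imageI)
      qed
    qed
    show "\<forall>x\<in>C. \<forall>y\<in>C. id x = id y \<longrightarrow> \<beta> x = \<beta> y" by auto
  qed
qed

definition PS :: "'a sgr \<Rightarrow> nat \<Rightarrow> (nat \<Rightarrow> 'a) sgr" where
  "PS S n = prod_sg (replicate n S)"

lemma PS_carrier: "fst (PS S n) = {f. (\<forall>i<n. f i \<in> fst S) \<and> (\<forall>i\<ge>n. f i = undefined)}"
  unfolding PS_def prod_carrier by simp

lemma PS_op: "snd (PS S n) = (\<lambda>f g i. if i < n then snd S (f i) (g i) else undefined)"
  unfolding PS_def prod_op by (auto intro!: ext)

lemma is_sg_PS: "is_sg S \<Longrightarrow> is_sg (PS S n)"
  unfolding PS_def by (rule is_sg_prod) simp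

lemma flatten:
  assumes S: "is_sg S" and m: "m > 0"
  shows "divides (prod_sg (replicate k (PS S m))) (PS S (k * m))"
proof -
  define C where "C = fst (prod_sg (replicate k (PS S m)))"
  define \<alpha> where "\<alpha> F = (\<lambda>j. if j < k * m then F (j div m) (j mod m) else undefined)" for F :: "nat \<Rightarrow> nat \<Rightarrow> 'a"
  have Cc: "C = {F. (\<forall>i<k. (\<forall>j<m. F i j \<in> fst S) \<and> (\<forall>j\<ge>m. F i j = undefined)) \<and> (\<forall>i\<ge>k. F i = undefined)}"
    unfolding C_def prod_carrier by (auto simp: PS_carrier)
  have dv: "j div m < k" if "j < k * m" for j using that m
    by (simp add: less_mult_imp_div_less)
  have md: "j mod m < m" for j using m by simp
  show ?thesis
  proof (rule factor[where \<alpha> = \<alpha> and C = C and op = "snd (prod_sg (replicate k (PS S m)))" and \<beta> = id])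
    show "is_sg (PS S (k * m))" using S by (rule is_sg_PS)
    show "C \<noteq> {}" unfolding C_def using is_sg_prod[of "replicate k (PS S m)"] is_sg_PS[OF S]
      unfolding is_sg_def by auto
    show "\<forall>x\<in>C. \<forall>y\<in>C. snd (prod_sg (replicate k (PS S m))) x y \<in> C"
      using is_sg_prod[of "replicate k (PS S m)"] is_sg_PS[OF S] unfolding C_def is_sg_def by auto
    show "sg_hom \<alpha> (C, snd (prod_sg (replicate k (PS S m)))) (PS S (k * m))"
      unfolding sg_hom_def fst_conv snd_conv
    proof (intro conjI ballI)
      fix x assume "x \<in> C" thus "\<alpha> x \<in> fst (PS S (k * m))"
        unfolding Cc PS_carrier \<alpha>_def using dv md by auto
    next
      fix x y assume "x \<in> C" "y \<in> C"
      show "\<alpha> (snd (prod_sg (replicate k (PS S m))) x y) = snd (PS S (k * m)) (\<alpha> x) (\<alpha> y)"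
        unfolding \<alpha>_def prod_op using dv md by (auto intro!: ext simp: PS_op)
    qed
    show "sg_hom id (C, snd (prod_sg (replicate k (PS S m)))) (prod_sg (replicate k (PS S m)))"
      unfolding sg_hom_def C_def by auto
    show "id ` C = fst (prod_sg (replicate k (PS S m)))" unfolding C_def by simp
    show "\<forall>x\<in>C. \<forall>y\<in>C. \<alpha> x = \<alpha> y \<longrightarrow> id x = id y"
    proof (intro ballI impI)
      fix x y assume x: "x \<in> C" and y: "y \<in> C" and e: "\<alpha> x = \<alpha> y"
      have "x i j = y i j" for i j
      proof (cases "i < k")
        case True
        show ?thesis
        proof (cases "j < m")
          case True
          have lt: "i * m + j < k * m"
          proof -
            have "i * m + j < i * m + m" using True by simp
            also have "\<dots> = Suc i * m" by simp
            also have "\<dots> \<le> k * m" using \<open>i < k\<close> by (intro mult_le_mono1) simp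
            finally show ?thesis .
          qed
          have "(i * m + j) div m = i" "(i * m + j) mod m = j" using True m by auto
          thus ?thesis using fun_cong[OF e, of "i * m + j"] lt unfolding \<alpha>_def by auto
        next
          case False thus ?thesis using x y \<open>i < k\<close> unfolding Cc by auto
        qed
      next
        case False thus ?thesis using x y unfolding Cc by auto
      qed
      thus "id x = id y" by (auto intro!: ext)
    qed
  qed
qed

lemma PS_mono:
  assumes S: "is_sg S" and le: "m \<le> m'"
  shows "divides (PS S m) (PS S m')"
proof -
  obtain s0 where s0: "s0 \<in> fst S" using S unfolding is_sg_def by auto
  define \<beta> where "\<beta> F = (\<lambda>i. if i < m then F i else undefined)" for F :: "nat \<Rightarrow> 'a"
  show ?thesis
  proof (rule factor[where \<alpha> = id and C = "fst (PS S m')" and op = "snd (PS S m')" and \<beta> = \<beta>])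
    show "is_sg (PS S m')" using S by (rule is_sg_PS)
    thus "fst (PS S m') \<noteq> {}" "\<forall>x\<in>fst (PS S m'). \<forall>y\<in>fst (PS S m'). snd (PS S m') x y \<in> fst (PS S m')"
      unfolding is_sg_def by auto
    show "sg_hom id (fst (PS S m'), snd (PS S m')) (PS S m')" unfolding sg_hom_def by auto
    show "sg_hom \<beta> (fst (PS S m'), snd (PS S m')) (PS S m)"
      unfolding sg_hom_def PS_carrier PS_op \<beta>_def using le by (auto intro!: ext)
    show "\<beta> ` fst (PS S m') = fst (PS S m)"
    proof
      show "\<beta> ` fst (PS S m') \<subseteq> fst (PS S m)" unfolding PS_carrier \<beta>_def using le by auto
      show "fst (PS S m) \<subseteq> \<beta> ` fst (PS S m')"
      proof
        fix G assume G: "G \<in> fst (PS S m)"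
        define F where "F = (\<lambda>i. if i < m then G i else if i < m' then s0 else undefined)"
        have "F \<in> fst (PS S m')" using G s0 le unfolding F_def PS_carrier by auto
        moreover have "\<beta> F = G" using G unfolding \<beta>_def F_def PS_carrier by (auto intro!: ext)
        ultimately show "G \<in> \<beta> ` fst (PS S m')" by (metis imageI)
      qed
    qed
    show "\<forall>x\<in>fst (PS S m'). \<forall>y\<in>fst (PS S m'). id x = id y \<longrightarrow> \<beta> x = \<beta> y" by auto
  qed
qed

lemma in_pv_single: "in_pv {S} U \<longleftrightarrow> fin_sg U \<and> (\<exists>n. divides U (PS S n))"
proof
  assume "in_pv {S} U"
  then obtain Ss where "fin_sg U" "set Ss \<subseteq> {S}" "divides U (prod_sg Ss)" unfolding in_pv_def by auto
  moreover have "Ss = replicate (length Ss) S" using \<open>set Ss \<subseteq> {S}\<close>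
    by (metis replicate_length_same singletonD subsetD)
  ultimately show "fin_sg U \<and> (\<exists>n. divides U (PS S n))" unfolding PS_def by metis
next
  assume "fin_sg U \<and> (\<exists>n. divides U (PS S n))"
  thus "in_pv {S} U" unfolding in_pv_def PS_def by (metis set_replicate_Suc set_replicate subset_refl empty_subsetI replicate_0 set_empty)
qed



definition one :: "'a sgr \<Rightarrow> 'a option" where
  "one R = (if is_monoid R then Some (SOME e. e \<in> fst R \<and> (\<forall>x\<in>fst R. snd R e x = x \<and> snd R x e = x)) else None)"

definition omul :: "'a sgr \<Rightarrow> 'a option \<Rightarrow> 'a \<Rightarrow> 'a option" where
  "omul R c t = (case c of None \<Rightarrow> Some t | Some y \<Rightarrow> Some (snd R y t))"

definition qc :: "'a sgr \<Rightarrow> ('a + 'a option) set" where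
  "qc R = Inl ` fst R \<union> Inr ` dot_carrier R"

definition qop :: "'a sgr \<Rightarrow> ('a + 'a option) \<Rightarrow> ('a + 'a option) \<Rightarrow> ('a + 'a option)" where
  "qop R a b = (case a of Inl s \<Rightarrow> (case b of Inl t \<Rightarrow> Inl (snd R s t) | Inr d \<Rightarrow> Inr d)
     | Inr c \<Rightarrow> (case b of Inl t \<Rightarrow> Inr (omul R c t) | Inr d \<Rightarrow> Inr d))"

definition qpi :: "'a sgr \<Rightarrow> ('a + 'a option) \<Rightarrow> ('a option \<Rightarrow> 'a option)" where
  "qpi R = case_sum (rmul R) (cmap R)"

lemma qop_simps[simp]:
  "qop R (Inl s) (Inl t) = Inl (snd R s t)" "qop R (Inl s) (Inr d) = Inr d"
  "qop R (Inr c) (Inl t) = Inr (omul R c t)" "qop R (Inr c) (Inr d) = Inr d"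
  by (simp_all add: qop_def)

lemma qpi_simps[simp]: "qpi R (Inl s) = rmul R s" "qpi R (Inr c) = cmap R c"
  by (simp_all add: qpi_def)

lemma some_dc: "t \<in> fst R \<Longrightarrow> Some t \<in> dot_carrier R"
  unfolding dot_carrier_def by auto

lemma none_dc: "None \<in> dot_carrier R \<longleftrightarrow> \<not> is_monoid R"
  unfolding dot_carrier_def by auto

lemma dc_cases: "c \<in> dot_carrier R \<Longrightarrow> c = None \<and> \<not> is_monoid R \<or> (\<exists>y\<in>fst R. c = Some y)"
  unfolding dot_carrier_def by (auto split: if_splits)

lemma one_monoid:
  assumes "is_monoid R"
  shows "\<exists>e. one R = Some e \<and> e \<in> fst R \<and> (\<forall>x\<in>fst R. snd R e x = x \<and> snd R x e = x)"
proof -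
  have "\<exists>e. e \<in> fst R \<and> (\<forall>x\<in>fst R. snd R e x = x \<and> snd R x e = x)" using assms unfolding is_monoid_def by auto
  hence "(SOME e. e \<in> fst R \<and> (\<forall>x\<in>fst R. snd R e x = x \<and> snd R x e = x)) \<in> fst R \<and>
    (\<forall>x\<in>fst R. snd R (SOME e. e \<in> fst R \<and> (\<forall>x\<in>fst R. snd R e x = x \<and> snd R x e = x)) x = x \<and>
       snd R x (SOME e. e \<in> fst R \<and> (\<forall>x\<in>fst R. snd R e x = x \<and> snd R x e = x)) = x)"
    by (rule someI_ex)
  thus ?thesis using assms unfolding one_def by auto
qed

lemma one_nonmonoid: "\<not> is_monoid R \<Longrightarrow> one R = None"
  unfolding one_def by simp

lemma one_dc: "one R \<in> dot_carrier R"
  by (cases "is_monoid R") (auto simp: none_dc one_nonmonoid dest!: one_monoid intro: some_dc)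

lemma one_mul: "t \<in> fst R \<Longrightarrow> omul R (one R) t = Some t"
  by (cases "is_monoid R") (auto simp: omul_def one_nonmonoid dest!: one_monoid)

lemma omul_dc: "is_sg R \<Longrightarrow> c \<in> dot_carrier R \<Longrightarrow> t \<in> fst R \<Longrightarrow> omul R c t \<in> dot_carrier R"
  by (auto simp: omul_def is_sg_def intro!: some_dc dest!: dc_cases)

lemma omul_assoc: "is_sg R \<Longrightarrow> c \<in> dot_carrier R \<Longrightarrow> s \<in> fst R \<Longrightarrow> t \<in> fst R \<Longrightarrow>
   omul R (omul R c s) t = omul R c (snd R s t)"
  by (auto simp: omul_def is_sg_def dest!: dc_cases)

lemma rmul_apply: "x \<in> dot_carrier R \<Longrightarrow> rmul R s x = omul R x s"
  unfolding rmul_def omul_def by simp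

lemma rmul_out: "x \<notin> dot_carrier R \<Longrightarrow> rmul R s x = None"
  unfolding rmul_def by simp

lemma cmap_apply: "x \<in> dot_carrier R \<Longrightarrow> cmap R c x = c" and cmap_out: "x \<notin> dot_carrier R \<Longrightarrow> cmap R c x = None"
  unfolding cmap_def by simp_all

lemma bar_op: "snd (bar R) f g = (\<lambda>x. if x \<in> dot_carrier R then g (f x) else None)"
  unfolding bar_def by simp

lemma bar_carrier: "fst (bar R) = rmul R ` fst R \<union> cmap R ` dot_carrier R"
  unfolding bar_def by simp

lemma rr: "is_sg R \<Longrightarrow> s \<in> fst R \<Longrightarrow> t \<in> fst R \<Longrightarrow> snd (bar R) (rmul R s) (rmul R t) = rmul R (snd R s t)"
  unfolding bar_op by (auto intro!: ext simp: rmul_apply rmul_out omul_dc omul_assoc)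

lemma rc: "is_sg R \<Longrightarrow> s \<in> fst R \<Longrightarrow> snd (bar R) (rmul R s) (cmap R c) = cmap R c"
  unfolding bar_op by (auto intro!: ext simp: rmul_apply cmap_apply cmap_out omul_dc)

lemma cr: "c \<in> dot_carrier R \<Longrightarrow> snd (bar R) (cmap R c) (rmul R t) = cmap R (omul R c t)"
  unfolding bar_op by (auto intro!: ext simp: rmul_apply cmap_apply cmap_out)

lemma cc: "c \<in> dot_carrier R \<Longrightarrow> snd (bar R) (cmap R c) (cmap R d) = cmap R d"
  unfolding bar_op by (auto intro!: ext simp: cmap_apply cmap_out)

lemma rmul_one: "s \<in> fst R \<Longrightarrow> rmul R s (one R) = Some s"
  by (simp add: rmul_apply one_dc one_mul)

lemma rmul_inj: "s \<in> fst R \<Longrightarrow> t \<in> fst R \<Longrightarrow> rmul R s = rmul R t \<Longrightarrow> s = t"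
  by (metis rmul_one option.inject)

lemma cmap_inj: "cmap R c = cmap R d \<Longrightarrow> c = d"
  by (metis cmap_apply one_dc)

lemma rmul_cmap:
  assumes "s \<in> fst R" "rmul R s = cmap R c"
  shows "c = Some s \<and> right_zero R s"
proof -
  have c: "c = Some s" using assms by (metis rmul_one cmap_apply one_dc)
  have "snd R y s = s" if "y \<in> fst R" for y
    using fun_cong[OF assms(2), of "Some y"] c that
    by (simp add: rmul_apply cmap_apply some_dc omul_def)
  thus ?thesis using c assms unfolding right_zero_def by auto
qed

lemma rz_eq: "right_zero R z \<Longrightarrow> rmul R z = cmap R (Some z)"
proof (rule ext)
  fix x assume z: "right_zero R z"
  show "rmul R z x = cmap R (Some z) x"
  proof (cases "x \<in> dot_carrier R")
    case True thus ?thesis using z unfolding right_zero_def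
      by (auto simp: rmul_apply cmap_apply omul_def dest!: dc_cases)
  qed (simp add: rmul_out cmap_out)
qed

lemma bar_maps_dc: "is_sg R \<Longrightarrow> f \<in> fst (bar R) \<Longrightarrow> x \<in> dot_carrier R \<Longrightarrow> f x \<in> dot_carrier R"
  unfolding bar_carrier by (auto simp: rmul_apply cmap_apply omul_dc)

lemma is_sg_bar:
  assumes R: "is_sg R"
  shows "is_sg (bar R)"
  unfolding is_sg_def
proof (intro conjI)
  show "fst (bar R) \<noteq> {}" unfolding bar_carrier using one_dc[of R] by auto
  show "\<forall>x\<in>fst (bar R). \<forall>y\<in>fst (bar R). snd (bar R) x y \<in> fst (bar R)"
  proof (intro ballI)
    fix f g assume f: "f \<in> fst (bar R)" and g: "g \<in> fst (bar R)"
    have cl: "snd R s t \<in> fst R" if "s \<in> fst R" "t \<in> fst R" for s t using R that unfolding is_sg_def by auto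
    show "snd (bar R) f g \<in> fst (bar R)"
      using f g unfolding bar_carrier
      by (auto simp: rr[OF R] rc[OF R] cr cc cl omul_dc[OF R])
  qed
  show "\<forall>x\<in>fst (bar R). \<forall>y\<in>fst (bar R). \<forall>z\<in>fst (bar R).
       snd (bar R) (snd (bar R) x y) z = snd (bar R) x (snd (bar R) y z)"
    unfolding bar_op using bar_maps_dc[OF R] by (auto intro!: ext)
qed

lemma qc_ne: "qc R \<noteq> {}"
  unfolding qc_def using one_dc[of R] by auto

lemma qc_closed: assumes R: "is_sg R" shows "a \<in> qc R \<Longrightarrow> b \<in> qc R \<Longrightarrow> qop R a b \<in> qc R"
  unfolding qc_def using omul_dc[OF R] R by (auto simp: is_sg_def)

lemma qpi_hom: "is_sg R \<Longrightarrow> sg_hom (qpi R) (qc R, qop R) (bar R)"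
  unfolding sg_hom_def fst_conv snd_conv
proof (intro conjI ballI)
  fix a assume "a \<in> qc R" thus "qpi R a \<in> fst (bar R)" unfolding qc_def bar_carrier by auto
next
  fix a b assume R: "is_sg R" and a: "a \<in> qc R" and b: "b \<in> qc R"
  show "qpi R (qop R a b) = snd (bar R) (qpi R a) (qpi R b)"
    using a b unfolding qc_def by (auto simp: rr[OF R] rc[OF R] cr cc)
qed

lemma qpi_onto: "qpi R ` qc R = fst (bar R)"
  unfolding qc_def bar_carrier by (auto simp: image_Un image_image)

lemma rmul_hom: "is_sg R \<Longrightarrow> sg_hom (rmul R) R (bar R)"
  unfolding sg_hom_def bar_carrier by (auto simp: rr)

lemma divides_bar_self: "is_sg R \<Longrightarrow> divides R (bar R)"
  apply (rule factor[where \<alpha> = "rmul R" and C = "fst R" and op = "snd R" and \<beta> = id])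
  using rmul_hom[of R] rmul_inj[of _ R] is_sg_bar[of R]
  by (auto simp: is_sg_def sg_hom_def)



lemma bar_embed:
  assumes S: "is_sg S" and JS: "J \<subseteq> fst S" and Jne: "J \<noteq> {}" and Jfin: "finite J"
    and rz: "\<forall>j\<in>J. right_zero S j"
    and cl: "\<forall>j\<in>J. \<forall>x\<in>fst S. snd S j x \<in> J" and fa: "faithful_right S J"
  shows "divides (bar S) (PS S (card J))"
proof -
  define N where "N = card J"
  obtain e where bij: "bij_betw e {0..<N} J" using ex_bij_betw_nat_finite[OF Jfin] N_def by auto
  define \<psi> where "\<psi> j q = (case q of Inl s \<Rightarrow> s | Inr c \<Rightarrow> (case c of None \<Rightarrow> j | Some y \<Rightarrow> snd S j y))"
    for j :: 'a and q :: "'a + 'a option"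
  define \<Psi> where "\<Psi> q = (\<lambda>i. if i < N then \<psi> (e i) q else undefined)" for q
  have Scl: "snd S x y \<in> fst S" if "x \<in> fst S" "y \<in> fst S" for x y using S that unfolding is_sg_def by auto
  have Sas: "snd S (snd S x y) z = snd S x (snd S y z)" if "x \<in> fst S" "y \<in> fst S" "z \<in> fst S" for x y z
    using S that unfolding is_sg_def by auto
  have rzJ: "snd S x j = j" if "j \<in> J" "x \<in> fst S" for x j using rz that unfolding right_zero_def by auto
  have psiJ: "\<psi> j (Inr c) \<in> J" if "j \<in> J" "c \<in> dot_carrier R'" "c \<in> dot_carrier S" for j c R'
    using that cl unfolding \<psi>_def by (auto dest!: dc_cases)
  have psiJ': "\<psi> j (Inr c) \<in> J" if "j \<in> J" "c \<in> dot_carrier S" for j c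
    using psiJ[OF that(1) that(2) that(2)] .
  have psiS: "\<psi> j q \<in> fst S" if "j \<in> J" "q \<in> qc S" for j q
  proof -
    from that(2) consider (l) s where "q = Inl s" "s \<in> fst S" | (r) c where "q = Inr c" "c \<in> dot_carrier S"
      unfolding qc_def by auto
    thus ?thesis
    proof cases
      case l thus ?thesis by (simp add: \<psi>_def)
    next
      case r thus ?thesis using psiJ'[OF that(1) r(2)] JS by blast
    qed
  qed
  have psi_hom: "\<psi> j (qop S a b) = snd S (\<psi> j a) (\<psi> j b)" if j: "j \<in> J" and a: "a \<in> qc S" and b: "b \<in> qc S" for j a b
  proof -
    from a consider (l) s where "a = Inl s" "s \<in> fst S" | (r) c where "a = Inr c" "c \<in> dot_carrier S"
      unfolding qc_def by auto
    thus ?thesis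
    proof cases
      case l
      from b consider (l2) t where "b = Inl t" "t \<in> fst S" | (r2) d where "b = Inr d" "d \<in> dot_carrier S"
        unfolding qc_def by auto
      thus ?thesis
      proof cases
        case l2 thus ?thesis using l by (simp add: \<psi>_def)
      next
        case r2
        have "\<psi> j (Inl s) = s" by (simp add: \<psi>_def)
        thus ?thesis using l r2 psiJ'[OF j r2(2)] rzJ by simp
      qed
    next
      case r
      from b consider (l2) t where "b = Inl t" "t \<in> fst S" | (r2) d where "b = Inr d" "d \<in> dot_carrier S"
        unfolding qc_def by auto
      thus ?thesis
      proof cases
        case l2
        have jS: "j \<in> fst S" using j JS by auto
        from dc_cases[OF r(2)] show ?thesis
        proof (elim disjE conjE bexE)
          assume "c = None" thus ?thesis using r l2 by (simp add: \<psi>_def omul_def)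
        next
          fix y assume "y \<in> fst S" "c = Some y"
          thus ?thesis using r l2 jS Sas by (simp add: \<psi>_def omul_def)
        qed
      next
        case r2
        have cS: "\<psi> j (Inr c) \<in> fst S" using psiJ'[OF j r(2)] JS by auto
        show ?thesis using rzJ[OF psiJ'[OF j r2(2)] cS] r r2 by simp
      qed
    qed
  qed
  have mon1: "is_monoid S" if y: "y \<in> fst S" and h: "\<forall>j\<in>J. snd S j y = j" for y
  proof -
    have "snd S y x = x \<and> snd S x y = x" if x: "x \<in> fst S" for x
    proof
      have "\<forall>j\<in>J. snd S j (snd S x y) = snd S j x"
      proof
        fix j assume j: "j \<in> J"
        have jS: "j \<in> fst S" using JS j by blast
        have "snd S j (snd S x y) = snd S (snd S j x) y" using Sas[OF jS x y] by simp
        also have "\<dots> = snd S j x" using h cl j x by blast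
        finally show "snd S j (snd S x y) = snd S j x" .
      qed
      thus "snd S x y = x" using fa x y Scl unfolding faithful_right_def by blast
      have "\<forall>j\<in>J. snd S j (snd S y x) = snd S j x"
      proof
        fix j assume j: "j \<in> J"
        have jS: "j \<in> fst S" using JS j by blast
        have "snd S j (snd S y x) = snd S (snd S j y) x" using Sas[OF jS y x] by simp
        also have "\<dots> = snd S j x" using h j by simp
        finally show "snd S j (snd S y x) = snd S j x" .
      qed
      thus "snd S y x = x" using fa x y Scl unfolding faithful_right_def by blast
    qed
    thus ?thesis unfolding is_monoid_def using y by blast
  qed
  have mon2: "is_monoid S" if s: "s \<in> fst S" and h: "\<forall>j\<in>J. j = s" for s
  proof -
    have sJ: "s \<in> J"
    proof -
      obtain j0 where j0: "j0 \<in> J" using Jne by blast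
      have "j0 = s" using h j0 by blast
      thus ?thesis using j0 by simp
    qed
    have sx: "snd S s x = s" if "x \<in> fst S" for x
    proof -
      have "snd S s x \<in> J" using cl sJ that by blast
      thus ?thesis using h by blast
    qed
    have "x = s" if x: "x \<in> fst S" for x
    proof -
      have "snd S j x = snd S j s" if j: "j \<in> J" for j
      proof -
        have "j = s" using h j by blast
        thus ?thesis using sx[OF x] sx[OF s] by simp
      qed
      thus ?thesis using fa x s unfolding faithful_right_def by blast
    qed
    have "snd S j s = j" if j: "j \<in> J" for j
    proof -
      have "j = s" using h j by blast
      thus ?thesis using sx[OF s] by simp
    qed
    hence "\<forall>j\<in>J. snd S j s = j" by blast
    thus ?thesis using mon1 s by blast
  qed
  have K2: "c = d" if c: "c \<in> dot_carrier S" and d: "d \<in> dot_carrier S"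
    and h: "\<forall>j\<in>J. \<psi> j (Inr c) = \<psi> j (Inr d)" for c d
  proof -
    have m: "\<not> is_monoid S" if "None \<in> dot_carrier S" using that none_dc[of S] by simp
    from dc_cases[OF c] dc_cases[OF d] show ?thesis
    proof (elim disjE conjE bexE)
      fix y assume a: "c = None" "\<not> is_monoid S" "y \<in> fst S" "d = Some y"
      hence "\<forall>j\<in>J. snd S j y = j" using h by (simp add: \<psi>_def)
      thus ?thesis using mon1[OF a(3)] a(2) by blast
    next
      fix y assume a: "d = None" "\<not> is_monoid S" "y \<in> fst S" "c = Some y"
      hence "\<forall>j\<in>J. snd S j y = j" using h by (simp add: \<psi>_def)
      thus ?thesis using mon1[OF a(3)] a(2) by blast
    next
      fix y y' assume a: "y \<in> fst S" "c = Some y" "y' \<in> fst S" "d = Some y'"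
      hence "\<forall>j\<in>J. snd S j y = snd S j y'" using h by (simp add: \<psi>_def)
      hence "y = y'" using fa a(1,3) unfolding faithful_right_def by blast
      thus ?thesis using a by simp
    qed simp
  qed
  have K1: "rmul S s = cmap S c" if s: "s \<in> fst S" and c: "c \<in> dot_carrier S"
    and h: "\<forall>j\<in>J. s = \<psi> j (Inr c)" for s c
  proof -
    obtain j0 where "j0 \<in> J" using Jne by auto
    hence sJ: "s \<in> J" using h psiJ'[OF _ c] by auto
    have "c = Some s"
    using dc_cases[OF c] proof (elim disjE conjE bexE)
      assume a: "c = None" "\<not> is_monoid S"
      hence "\<forall>j\<in>J. j = s" using h by (simp add: \<psi>_def)
      thus ?thesis using mon2[OF s] a(2) by blast
    next
      fix y assume y: "y \<in> fst S" "c = Some y"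
      have "\<forall>j\<in>J. snd S j y = snd S j s" using h y rzJ[OF sJ] JS by (auto simp: \<psi>_def)
      thus ?thesis using fa y s unfolding faithful_right_def by auto
    qed
    thus ?thesis using rz_eq[of S s] rz sJ by auto
  qed
  show ?thesis unfolding N_def[symmetric]
  proof (rule factor[where \<alpha> = \<Psi> and C = "qc S" and op = "qop S" and \<beta> = "qpi S"])
    show "is_sg (PS S N)" using S by (rule is_sg_PS)
    show "qc S \<noteq> {}" by (rule qc_ne)
    show "\<forall>x\<in>qc S. \<forall>y\<in>qc S. qop S x y \<in> qc S" using qc_closed[OF S] by auto
    show "sg_hom \<Psi> (qc S, qop S) (PS S N)"
      unfolding sg_hom_def fst_conv snd_conv
    proof (intro conjI ballI)
      have eJ: "e i \<in> J" if "i < N" for i using bij that unfolding bij_betw_def by auto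
      fix q assume "q \<in> qc S"
      thus "\<Psi> q \<in> fst (PS S N)" unfolding PS_carrier \<Psi>_def using psiS eJ by simp
    next
      have eJ: "e i \<in> J" if "i < N" for i using bij that unfolding bij_betw_def by auto
      fix a b assume a: "a \<in> qc S" and b: "b \<in> qc S"
      show "\<Psi> (qop S a b) = snd (PS S N) (\<Psi> a) (\<Psi> b)"
      proof (rule ext)
        fix i show "\<Psi> (qop S a b) i = snd (PS S N) (\<Psi> a) (\<Psi> b) i"
          unfolding PS_op \<Psi>_def using psi_hom[OF eJ a b] by simp
      qed
    qed
    show "sg_hom (qpi S) (qc S, qop S) (bar S)" using S by (rule qpi_hom)
    show "qpi S ` qc S = fst (bar S)" by (rule qpi_onto)
    show "\<forall>x\<in>qc S. \<forall>y\<in>qc S. \<Psi> x = \<Psi> y \<longrightarrow> qpi S x = qpi S y"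
    proof (intro ballI impI)
      fix a b assume a: "a \<in> qc S" and b: "b \<in> qc S" and eq: "\<Psi> a = \<Psi> b"
      have h: "\<forall>j\<in>J. \<psi> j a = \<psi> j b"
      proof
        fix j assume "j \<in> J"
        then obtain i where "i < N" "e i = j" using bij unfolding bij_betw_def by auto
        thus "\<psi> j a = \<psi> j b" using fun_cong[OF eq, of i] unfolding \<Psi>_def by auto
      qed
      from a b show "qpi S a = qpi S b" unfolding qc_def
      proof (elim UnE imageE)
        fix s t assume a: "a = Inl s" "b = Inl t"
        obtain j0 where "j0 \<in> J" using Jne by auto
        hence "s = t" using h a by (auto simp: \<psi>_def)
        thus ?thesis using a by simp
      next
        fix s d assume a: "a = Inl s" "b = Inr d" "s \<in> fst S" "d \<in> dot_carrier S"
        hence "\<forall>j\<in>J. s = \<psi> j (Inr d)" using h by (simp add: \<psi>_def)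
        thus ?thesis using K1[OF a(3) a(4)] a by simp
      next
        fix c t assume a: "a = Inr c" "b = Inl t" "t \<in> fst S" "c \<in> dot_carrier S"
        hence "\<forall>j\<in>J. t = \<psi> j (Inr c)" using h by (simp add: \<psi>_def)
        thus ?thesis using K1[OF a(3) a(4)] a by simp
      next
        fix c d assume "a = Inr c" "b = Inr d" "c \<in> dot_carrier S" "d \<in> dot_carrier S"
        hence "c = d" using h K2 by blast
        thus ?thesis using \<open>a = Inr c\<close> \<open>b = Inr d\<close> by simp
      qed
    qed
  qed
qed



lemma sg_hom_sub: "sg_hom f (A, op) B \<Longrightarrow> C \<subseteq> A \<Longrightarrow> sg_hom f (C, op) B"
  unfolding sg_hom_def by auto

lemma bar_divides:
  assumes R: "is_sg R" and T: "is_sg T" and d: "divides T R"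
  shows "divides (bar T) (bar R)"
proof -
  obtain W \<phi> where W1: "W \<subseteq> fst R" and W2: "is_sg (W, snd R)" and W3: "sg_hom \<phi> (W, snd R) T"
    and W4: "\<phi> ` W = fst T"
    using d unfolding divides_def by blast
  have Wcl: "snd R x y \<in> W" if "x \<in> W" "y \<in> W" for x y using W2 that unfolding is_sg_def by auto
  have phiT: "\<phi> x \<in> fst T" if "x \<in> W" for x using W3 that unfolding sg_hom_def by auto
  have phih: "\<phi> (snd R x y) = snd T (\<phi> x) (\<phi> y)" if "x \<in> W" "y \<in> W" for x y
    using W3 that unfolding sg_hom_def by auto
  define C where "C = Inl ` W \<union> Inr ` (Some ` W \<union> {one R})"
  define \<phi>d where "\<phi>d c = (if c \<in> Some ` W then Some (\<phi> (the c)) else one T)" for c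
  define \<beta> where "\<beta> a = (case a of Inl s \<Rightarrow> rmul T (\<phi> s) | Inr c \<Rightarrow> cmap T (\<phi>d c))" for a
  have bl[simp]: "\<beta> (Inl s) = rmul T (\<phi> s)" and br[simp]: "\<beta> (Inr c) = cmap T (\<phi>d c)" for s c
    unfolding \<beta>_def by simp_all
  have phid_some: "\<phi>d (Some w) = Some (\<phi> w)" if "w \<in> W" for w using that unfolding \<phi>d_def by auto
  have phid_dc: "\<phi>d c \<in> dot_carrier T" if "c \<in> Some ` W \<union> {one R}" for c
  proof (cases "c \<in> Some ` W")
    case True
    then obtain w where "w \<in> W" "c = Some w" by auto
    thus ?thesis using phiT some_dc[of _ T] unfolding \<phi>d_def by auto
  next
    case False thus ?thesis using one_dc[of T] unfolding \<phi>d_def by simp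
  qed
  have key: "\<phi>d (omul R c t) = omul T (\<phi>d c) (\<phi> t)" if c: "c \<in> Some ` W \<union> {one R}" and t: "t \<in> W" for c t
  proof (cases "c \<in> Some ` W")
    case True
    then obtain w where w: "w \<in> W" "c = Some w" by auto
    have "omul R c t = Some (snd R w t)" using w by (simp add: omul_def)
    hence "\<phi>d (omul R c t) = Some (\<phi> (snd R w t))" using phid_some Wcl w t by simp
    also have "\<dots> = omul T (\<phi>d c) (\<phi> t)" using phih[OF w(1) t] phid_some[OF w(1)] w by (simp add: omul_def)
    finally show ?thesis .
  next
    case False
    hence c1: "c = one R" using c by auto
    have tR: "t \<in> fst R" using t W1 by auto
    have "\<phi>d (omul R c t) = Some (\<phi> t)" using c1 one_mul[OF tR] phid_some[OF t] by simp
    also have "\<dots> = omul T (one T) (\<phi> t)" using one_mul[OF phiT[OF t]] by simp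
    also have "one T = \<phi>d c" using False unfolding \<phi>d_def by simp
    finally show ?thesis .
  qed
  have CR: "C \<subseteq> qc R" unfolding C_def qc_def using W1 one_dc[of R] some_dc[of _ R] by auto
  show ?thesis
  proof (rule factor[where \<alpha> = "qpi R" and C = C and op = "qop R" and \<beta> = \<beta>])
    show "is_sg (bar R)" using R by (rule is_sg_bar)
    show "C \<noteq> {}" unfolding C_def by auto
    show "\<forall>x\<in>C. \<forall>y\<in>C. qop R x y \<in> C"
    proof (intro ballI)
      fix a b assume a: "a \<in> C" and b: "b \<in> C"
      show "qop R a b \<in> C"
      proof (cases a)
        case (Inl s)
        hence s: "s \<in> W" using a unfolding C_def by auto
        show ?thesis
        proof (cases b)
          case (Inl t) thus ?thesis using \<open>a = Inl s\<close> s b Wcl unfolding C_def by auto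
        next
          case (Inr d) thus ?thesis using \<open>a = Inl s\<close> b by simp
        qed
      next
        case (Inr c)
        hence c: "c \<in> Some ` W \<union> {one R}" using a unfolding C_def by auto
        show ?thesis
        proof (cases b)
          case (Inl t)
          hence t: "t \<in> W" using b unfolding C_def by auto
          have "omul R c t \<in> Some ` W"
          proof (cases "c \<in> Some ` W")
            case True thus ?thesis using t Wcl by (auto simp: omul_def)
          next
            case False hence "c = one R" using c by auto
            thus ?thesis using one_mul[of t R] t W1 by auto
          qed
          thus ?thesis using \<open>a = Inr c\<close> \<open>b = Inl t\<close> unfolding C_def by auto
        next
          case (Inr d) thus ?thesis using \<open>a = Inr c\<close> b by simp
        qed
      qed
    qed
    show "sg_hom (qpi R) (C, qop R) (bar R)" using sg_hom_sub[OF qpi_hom[OF R] CR] .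
    show "sg_hom \<beta> (C, qop R) (bar T)"
      unfolding sg_hom_def fst_conv snd_conv
    proof (intro conjI ballI)
      fix a assume "a \<in> C"
      thus "\<beta> a \<in> fst (bar T)" unfolding C_def bar_carrier using phiT phid_dc by auto
    next
      fix a b assume a: "a \<in> C" and b: "b \<in> C"
      show "\<beta> (qop R a b) = snd (bar T) (\<beta> a) (\<beta> b)"
      proof (cases a)
        case (Inl s)
        hence s: "s \<in> W" using a unfolding C_def by auto
        show ?thesis
        proof (cases b)
          case (Inl t)
          hence t: "t \<in> W" using b unfolding C_def by auto
          show ?thesis using \<open>a = Inl s\<close> Inl rr[OF T phiT[OF s] phiT[OF t]] phih[OF s t] by simp
        next
          case (Inr d) thus ?thesis using \<open>a = Inl s\<close> rc[OF T phiT[OF s]] by simp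
        qed
      next
        case (Inr c)
        hence c: "c \<in> Some ` W \<union> {one R}" using a unfolding C_def by auto
        show ?thesis
        proof (cases b)
          case (Inl t)
          hence t: "t \<in> W" using b unfolding C_def by auto
          show ?thesis using \<open>a = Inr c\<close> Inl cr[OF phid_dc[OF c]] key[OF c t] by simp
        next
          case (Inr d) thus ?thesis using \<open>a = Inr c\<close> cc[OF phid_dc[OF c]] by simp
        qed
      qed
    qed
    show "\<beta> ` C = fst (bar T)"
    proof
      show "\<beta> ` C \<subseteq> fst (bar T)" unfolding C_def bar_carrier using phiT phid_dc by auto
      show "fst (bar T) \<subseteq> \<beta> ` C"
      proof
        fix f assume "f \<in> fst (bar T)"
        then consider (r) t where "t \<in> fst T" "f = rmul T t" | (c) c where "c \<in> dot_carrier T" "f = cmap T c"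
          unfolding bar_carrier by auto
        thus "f \<in> \<beta> ` C"
        proof cases
          case r
          then obtain w where "w \<in> W" "t = \<phi> w" using W4 by (metis imageE)
          hence "f = \<beta> (Inl w)" "Inl w \<in> C" using r unfolding C_def by auto
          thus ?thesis by blast
        next
          case c
          from dc_cases[OF c(1)] show ?thesis
          proof (elim disjE conjE bexE)
            fix y assume "y \<in> fst T" "c = Some y"
            then obtain w where "w \<in> W" "y = \<phi> w" using W4 by (metis imageE)
            hence "f = \<beta> (Inr (Some w))" "Inr (Some w) \<in> C"
              using c \<open>c = Some y\<close> phid_some unfolding C_def by auto
            thus ?thesis by blast
          next
            assume cn: "c = None" "\<not> is_monoid T"
            have "one R \<notin> Some ` W"
            proof
              assume "one R \<in> Some ` W"
              then obtain w where w: "w \<in> W" "one R = Some w" by auto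
              hence "is_monoid R" using one_nonmonoid[of R] by fastforce
              then obtain e where e: "one R = Some e" "e \<in> fst R" "\<forall>x\<in>fst R. snd R e x = x \<and> snd R x e = x"
                using one_monoid by blast
              have "w = e" using w e by simp
              have "snd T (\<phi> w) y = y \<and> snd T y (\<phi> w) = y" if y: "y \<in> fst T" for y
              proof -
                obtain v where v: "v \<in> W" "y = \<phi> v" using y W4 by (metis imageE)
                have "v \<in> fst R" using v W1 by auto
                thus ?thesis using phih[OF w(1) v(1)] phih[OF v(1) w(1)] e \<open>w = e\<close> v by auto
              qed
              hence "is_monoid T" unfolding is_monoid_def using phiT[OF w(1)] by blast
              thus False using cn by simp
            qed
            hence "\<phi>d (one R) = None" unfolding \<phi>d_def using one_nonmonoid[of T] cn by simp
            hence "f = \<beta> (Inr (one R))" "Inr (one R) \<in> C" using c cn unfolding C_def by auto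
            thus ?thesis by blast
          qed
        qed
      qed
    qed
    show "\<forall>x\<in>C. \<forall>y\<in>C. qpi R x = qpi R y \<longrightarrow> \<beta> x = \<beta> y"
    proof (intro ballI impI)
      fix a b assume a: "a \<in> C" and b: "b \<in> C" and eq: "qpi R a = qpi R b"
      have rzT: "rmul T (\<phi> s) = cmap T (Some (\<phi> s))" if s: "s \<in> W" and rzs: "right_zero R s" for s
      proof -
        have "right_zero T (\<phi> s)" unfolding right_zero_def
        proof (intro conjI ballI)
          show "\<phi> s \<in> fst T" using phiT[OF s] .
          fix y assume "y \<in> fst T"
          then obtain v where v: "v \<in> W" "y = \<phi> v" using W4 by (metis imageE)
          have vs: "snd R v s = s" using rzs v W1 unfolding right_zero_def by auto
          have "snd T y (\<phi> s) = \<phi> (snd R v s)" using phih[OF v(1) s] v(2) by simp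
          thus "snd T y (\<phi> s) = \<phi> s" using vs by simp
        qed
        thus ?thesis by (rule rz_eq)
      qed
      show "\<beta> a = \<beta> b"
      proof (cases a)
        case (Inl s)
        hence s: "s \<in> W" using a unfolding C_def by auto
        show ?thesis
        proof (cases b)
          case (Inl t)
          hence t: "t \<in> W" using b unfolding C_def by auto
          have e1: "rmul R s = rmul R t" using eq \<open>a = Inl s\<close> Inl by simp
          have sR: "s \<in> fst R" and tR: "t \<in> fst R" using s t W1 by blast+
          have "s = t" using rmul_inj[OF sR tR e1] .
          thus ?thesis using \<open>a = Inl s\<close> Inl by simp
        next
          case (Inr d)
          have e1: "rmul R s = cmap R d" using eq \<open>a = Inl s\<close> Inr by simp
          have sR: "s \<in> fst R" using s W1 by blast
          have dd: "d = Some s" and rzs: "right_zero R s" using rmul_cmap[OF sR e1] by auto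
          have "\<beta> a = rmul T (\<phi> s)" using \<open>a = Inl s\<close> by simp
          also have "\<dots> = cmap T (Some (\<phi> s))" using rzT[OF s rzs] .
          also have "\<dots> = \<beta> b" using Inr dd phid_some[OF s] by simp
          finally show ?thesis .
        qed
      next
        case (Inr c)
        show ?thesis
        proof (cases b)
          case (Inl t)
          hence t: "t \<in> W" using b unfolding C_def by auto
          have e1: "rmul R t = cmap R c" using eq \<open>a = Inr c\<close> Inl by simp
          have tR: "t \<in> fst R" using t W1 by blast
          have dd: "c = Some t" and rzt: "right_zero R t" using rmul_cmap[OF tR e1] by auto
          have "\<beta> b = rmul T (\<phi> t)" using Inl by simp
          also have "\<dots> = cmap T (Some (\<phi> t))" using rzT[OF t rzt] .
          also have "\<dots> = \<beta> a" using \<open>a = Inr c\<close> dd phid_some[OF t] by simp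
          finally show ?thesis by simp
        next
          case (Inr d)
          have "cmap R c = cmap R d" using eq \<open>a = Inr c\<close> Inr by simp
          hence "c = d" by (rule cmap_inj)
          thus ?thesis using \<open>a = Inr c\<close> Inr by simp
        qed
      qed
    qed
  qed
qed



lemma divides_singleton:
  fixes X :: "'a sgr"
  assumes X: "is_sg X" shows "divides X (prod_sg [X])"
proof -
  define \<alpha> where "\<alpha> x = (\<lambda>i::nat. if i < 1 then x else undefined)" for x :: 'a
  show ?thesis
  proof (rule factor[where \<alpha> = \<alpha> and C = "fst X" and op = "snd X" and \<beta> = id])
    show "is_sg (prod_sg [X])" using X by (intro is_sg_prod) simp
    show "fst X \<noteq> {}" "\<forall>x\<in>fst X. \<forall>y\<in>fst X. snd X x y \<in> fst X" using X unfolding is_sg_def by auto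
    show "sg_hom \<alpha> (fst X, snd X) (prod_sg [X])"
      unfolding sg_hom_def prod_carrier prod_op \<alpha>_def by (auto intro!: ext)
    show "sg_hom id (fst X, snd X) X" unfolding sg_hom_def by simp
    show "id ` fst X = fst X" by simp
    show "\<forall>x\<in>fst X. \<forall>y\<in>fst X. \<alpha> x = \<alpha> y \<longrightarrow> id x = id y"
      unfolding \<alpha>_def by (metis id_apply less_one)
  qed
qed

lemma nat_copy:
  fixes U :: "'b sgr"
  assumes U: "fin_sg U"
  shows "\<exists>U0 :: nat sgr. fin_sg U0 \<and> divides U U0 \<and> divides U0 U"
proof -
  have Us: "is_sg U" and Uf: "finite (fst U)" using U unfolding fin_sg_def by auto
  obtain h where h: "bij_betw h (fst U) {0..<card (fst U)}" using ex_bij_betw_finite_nat[OF Uf] by blast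
  define g where "g = inv_into (fst U) h"
  have gb: "bij_betw g {0..<card (fst U)} (fst U)" unfolding g_def using h by (rule bij_betw_inv_into)
  have gh: "g (h x) = x" if "x \<in> fst U" for x
    unfolding g_def using h that by (simp add: bij_betw_def inv_into_f_f)
  have hg: "h (g a) = a" if "a \<in> {0..<card (fst U)}" for a
    unfolding g_def using h that by (simp add: bij_betw_inv_into_right)
  have gin: "g a \<in> fst U" if "a \<in> {0..<card (fst U)}" for a using bij_betwE[OF gb] that by blast
  have hin: "h x \<in> {0..<card (fst U)}" if "x \<in> fst U" for x using bij_betwE[OF h] that by blast
  have Ucl: "snd U x y \<in> fst U" if "x \<in> fst U" "y \<in> fst U" for x y using Us that unfolding is_sg_def by auto
  have Uas: "snd U (snd U x y) z = snd U x (snd U y z)" if "x \<in> fst U" "y \<in> fst U" "z \<in> fst U" for x y z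
    using Us that unfolding is_sg_def by auto
  define U0 :: "nat sgr" where "U0 = ({0..<card (fst U)}, \<lambda>a b. h (snd U (g a) (g b)))"
  have U0s: "is_sg U0" unfolding is_sg_def U0_def fst_conv snd_conv
  proof (intro conjI ballI)
    show "{0..<card (fst U)} \<noteq> {}" using Us Uf unfolding is_sg_def by (simp add: card_gt_0_iff)
    fix x y assume x: "x \<in> {0..<card (fst U)}" and y: "y \<in> {0..<card (fst U)}"
    show "h (snd U (g x) (g y)) \<in> {0..<card (fst U)}" using hin Ucl gin x y by blast
    fix z assume z: "z \<in> {0..<card (fst U)}"
    show "h (snd U (g (h (snd U (g x) (g y)))) (g z)) = h (snd U (g x) (g (h (snd U (g y) (g z)))))"
      using gh Ucl gin x y z Uas by simp
  qed
  have "fin_sg U0" using U0s unfolding fin_sg_def U0_def by simp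
  moreover have "divides U U0"
  proof (rule factor[where \<alpha> = id and C = "fst U0" and op = "snd U0" and \<beta> = g])
    show "is_sg U0" by fact
    thus "fst U0 \<noteq> {}" "\<forall>x\<in>fst U0. \<forall>y\<in>fst U0. snd U0 x y \<in> fst U0" unfolding is_sg_def by auto
    show "sg_hom id (fst U0, snd U0) U0" unfolding sg_hom_def by simp
    show "sg_hom g (fst U0, snd U0) U" unfolding sg_hom_def U0_def using gin gh Ucl by simp
    show "g ` fst U0 = fst U" unfolding U0_def using gb by (simp add: bij_betw_def)
    show "\<forall>x\<in>fst U0. \<forall>y\<in>fst U0. id x = id y \<longrightarrow> g x = g y" by simp
  qed
  moreover have "divides U0 U"
  proof (rule factor[where \<alpha> = id and C = "fst U" and op = "snd U" and \<beta> = h])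
    show "is_sg U" by fact
    thus "fst U \<noteq> {}" "\<forall>x\<in>fst U. \<forall>y\<in>fst U. snd U x y \<in> fst U" unfolding is_sg_def by auto
    show "sg_hom id (fst U, snd U) U" unfolding sg_hom_def by simp
    show "sg_hom h (fst U, snd U) U0" unfolding sg_hom_def U0_def using hin gh by simp
    show "h ` fst U = fst U0" unfolding U0_def using h by (simp add: bij_betw_def)
    show "\<forall>x\<in>fst U. \<forall>y\<in>fst U. id x = id y \<longrightarrow> h x = h y" by simp
  qed
  ultimately show ?thesis by blast
qed

lemma PS_finite: "finite (fst S) \<Longrightarrow> finite (fst (PS S n))"
proof -
  assume f: "finite (fst S)"
  define L where "L = {xs. set xs \<subseteq> fst S \<and> length xs = n}"
  have "finite L" unfolding L_def using f by (rule finite_lists_length_eq)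
  moreover have "fst (PS S n) \<subseteq> (\<lambda>xs i. if i < n then xs ! i else undefined) ` L"
  proof
    fix F assume F: "F \<in> fst (PS S n)"
    have "F = (\<lambda>i. if i < n then map F [0..<n] ! i else undefined)"
      using F unfolding PS_carrier by (auto intro!: ext)
    moreover have "map F [0..<n] \<in> L" using F unfolding L_def PS_carrier by auto
    ultimately show "F \<in> (\<lambda>xs i. if i < n then xs ! i else undefined) ` L" by blast
  qed
  ultimately show ?thesis by (rule finite_surj)
qed

lemma M2:
  assumes S: "fin_sg S" and mi: "minimal_ideal S J" and rz: "\<forall>z\<in>J. right_zero S z"
    and fa: "faithful_right S J" and T: "in_pv {S} T"
  shows "\<exists>m. divides (bar T) (PS S m)"
proof -
  have Ss: "is_sg S" and Sf: "finite (fst S)" using S unfolding fin_sg_def by auto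
  obtain n where Tn: "divides T (PS S n)" and Tf: "fin_sg T" using T unfolding in_pv_single by auto
  have Ts: "is_sg T" using Tf unfolding fin_sg_def by auto
  define R where "R = PS S (Suc n)"
  have Rs: "is_sg R" unfolding R_def using Ss by (rule is_sg_PS)
  have TR: "divides T R" unfolding R_def
    using divides_trans[OF Tn PS_mono[OF Ss, of n "Suc n"] is_sg_PS[OF Ss]] by simp
  have bTR: "divides (bar T) (bar R)" using bar_divides[OF Rs Ts TR] .
  have Jid: "is_ideal S J" using mi unfolding minimal_ideal_def by auto
  have JS: "J \<subseteq> fst S" and Jne: "J \<noteq> {}" and Jcl: "\<forall>s\<in>fst S. \<forall>x\<in>J. snd S x s \<in> J"
    using Jid unfolding is_ideal_def by auto
  define JR where "JR = {F \<in> fst R. \<forall>i<Suc n. F i \<in> J}"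
  have JRR: "JR \<subseteq> fst R" unfolding JR_def by auto
  obtain j0 where j0: "j0 \<in> J" using Jne by auto
  define cst where "cst j = (\<lambda>i::nat. if i < Suc n then j else undefined)" for j :: 'a
  have cstJR: "cst j \<in> JR" if "j \<in> J" for j
    using that JS unfolding JR_def R_def PS_carrier cst_def by auto
  have JRne: "JR \<noteq> {}" using cstJR[OF j0] by auto
  have JRf: "finite JR" using finite_subset[OF JRR] PS_finite[OF Sf] unfolding R_def by blast
  have JRrz: "\<forall>j\<in>JR. right_zero R j"
  proof
    fix F assume F: "F \<in> JR"
    show "right_zero R F" unfolding right_zero_def
    proof (intro conjI ballI)
      show "F \<in> fst R" using F JRR by auto
      fix X assume X: "X \<in> fst R"
      show "snd R X F = F"
      proof (rule ext)
        fix i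
        show "snd R X F i = F i"
        proof (cases "i < Suc n")
          case True
          hence "F i \<in> J" "X i \<in> fst S" using F X unfolding JR_def R_def PS_carrier by auto
          thus ?thesis using rz True unfolding R_def PS_op right_zero_def by auto
        next
          case False thus ?thesis using F unfolding JR_def R_def PS_op PS_carrier by auto
        qed
      qed
    qed
  qed
  have JRcl: "\<forall>j\<in>JR. \<forall>x\<in>fst R. snd R j x \<in> JR"
  proof (intro ballI)
    fix F X assume F: "F \<in> JR" and X: "X \<in> fst R"
    have "snd R F X \<in> fst R" using Rs F X JRR unfolding is_sg_def by auto
    moreover have "\<forall>i<Suc n. snd R F X i \<in> J"
      using F X Jcl unfolding JR_def R_def PS_op PS_carrier by auto
    ultimately show "snd R F X \<in> JR" unfolding JR_def by auto
  qed
  have JRfa: "faithful_right R JR" unfolding faithful_right_def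
  proof (intro ballI impI)
    fix X Y assume X: "X \<in> fst R" and Y: "Y \<in> fst R" and h: "\<forall>F\<in>JR. snd R F X = snd R F Y"
    show "X = Y"
    proof (rule ext)
      fix i show "X i = Y i"
      proof (cases "i < Suc n")
        case True
        have "\<forall>j\<in>J. snd S j (X i) = snd S j (Y i)"
        proof
          fix j assume j: "j \<in> J"
          have "snd R (cst j) X i = snd R (cst j) Y i" using h cstJR[OF j] by simp
          thus "snd S j (X i) = snd S j (Y i)" using True unfolding R_def PS_op cst_def by simp
        qed
        moreover have "X i \<in> fst S" "Y i \<in> fst S" using X Y True unfolding R_def PS_carrier by auto
        ultimately show ?thesis using fa unfolding faithful_right_def by blast
      next
        case False thus ?thesis using X Y unfolding R_def PS_carrier by auto
      qed
    qed
  qed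
  have bR: "divides (bar R) (PS R (card JR))"
    using bar_embed[OF Rs JRR JRne JRf JRrz JRcl JRfa] .
  have fl: "divides (PS R (card JR)) (PS S (card JR * Suc n))"
    using flatten[OF Ss, of "Suc n" "card JR"] unfolding R_def PS_def[of "PS S (Suc n)"] by simp
  have "divides (bar T) (PS R (card JR))"
    using divides_trans[OF bTR bR is_sg_PS[OF Rs]] .
  hence "divides (bar T) (PS S (card JR * Suc n))"
    using divides_trans[OF _ fl is_sg_PS[OF Ss]] by blast
  thus ?thesis by blast
qed

theorem corollary2p6:
  fixes S :: "'a sgr" and J :: "'a set" and U :: "'b sgr"
  assumes "fin_sg S"
    and "minimal_ideal S J"
    and "\<forall>z\<in>J. right_zero S z"
    and "faithful_right S J"
  shows "in_pv (bar ` {T :: nat sgr. in_pv {S} T}) U \<longleftrightarrow> in_pv {S} U"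
proof
  have Ss: "is_sg S" using assms(1) unfolding fin_sg_def by auto
  assume H: "in_pv (bar ` {T :: nat sgr. in_pv {S} T}) U"
  then obtain Ss where Uf: "fin_sg U" and Ssub: "set Ss \<subseteq> bar ` {T :: nat sgr. in_pv {S} T}"
    and Ud: "divides U (prod_sg Ss)" unfolding in_pv_def by auto
  define k where "k = length Ss"
  have "\<forall>i. \<exists>m. i < k \<longrightarrow> divides (Ss ! i) (PS S m)"
  proof
    fix i show "\<exists>m. i < k \<longrightarrow> divides (Ss ! i) (PS S m)"
    proof (cases "i < k")
      case True
      hence "Ss ! i \<in> set Ss" unfolding k_def by simp
      then obtain T where "in_pv {S} T" "Ss ! i = bar T" using Ssub by auto
      thus ?thesis using M2[OF assms \<open>in_pv {S} T\<close>] by auto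
    qed simp
  qed
  then obtain mf where mf: "\<And>i. i < k \<Longrightarrow> divides (Ss ! i) (PS S (mf i))" by metis
  define mm where "mm = Suc (\<Sum>i<k. mf i)"
  have "divides (Ss ! i) (PS S mm)" if i: "i < k" for i
  proof -
    have "mf i \<le> (\<Sum>i<k. mf i)" using i by (intro member_le_sum) auto
    hence "mf i \<le> mm" unfolding mm_def by simp
    thus ?thesis using divides_trans[OF mf[OF i] PS_mono[OF Ss] is_sg_PS[OF Ss]] by blast
  qed
  hence pd: "divides (prod_sg Ss) (prod_sg (replicate k (PS S mm)))"
    using is_sg_PS[OF Ss] by (intro prod_divides) (auto simp: k_def)
  have fl: "divides (prod_sg (replicate k (PS S mm))) (PS S (k * mm))"
    using flatten[OF Ss, of mm k] unfolding mm_def by simp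
  have "divides U (prod_sg (replicate k (PS S mm)))"
    using divides_trans[OF Ud pd] is_sg_prod[of "replicate k (PS S mm)"] is_sg_PS[OF Ss] by simp
  hence "divides U (PS S (k * mm))" using divides_trans[OF _ fl is_sg_PS[OF Ss]] by blast
  thus "in_pv {S} U" unfolding in_pv_single using Uf by blast
next
  have Ss: "is_sg S" using assms(1) unfolding fin_sg_def by auto
  assume "in_pv {S} U"
  then obtain n where Uf: "fin_sg U" and Un: "divides U (PS S n)" unfolding in_pv_single by auto
  obtain U0 :: "nat sgr" where U0: "fin_sg U0" "divides U U0" "divides U0 U" using nat_copy[OF Uf] by blast
  have U0s: "is_sg U0" using U0 unfolding fin_sg_def by auto
  have "divides U0 (PS S n)" using divides_trans[OF U0(3) Un is_sg_PS[OF Ss]] .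
  hence U0in: "in_pv {S} U0" unfolding in_pv_single using U0(1) by blast
  have bs: "is_sg (bar U0)" using U0s by (rule is_sg_bar)
  have "divides U (bar U0)" using divides_trans[OF U0(2) divides_bar_self[OF U0s] bs] .
  hence "divides U (prod_sg [bar U0])"
    using divides_trans[OF _ divides_singleton[OF bs]] is_sg_prod[of "[bar U0]"] bs by simp
  moreover have "set [bar U0] \<subseteq> bar ` {T :: nat sgr. in_pv {S} T}" using U0in by auto
  ultimately show "in_pv (bar ` {T :: nat sgr. in_pv {S} T}) U" unfolding in_pv_def using Uf by blast
qed

end
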